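(* Let $f_{SN_1}(x)=\sqrt{\frac{x^2+1}{2}}-\left(\frac{\sqrt x+1}{2}\right)^2$ for $x\in(0,\infty)$, let $f_{SN_1}^*(u)=u\,f_{SN_1}\!\left(\frac{1-u}{u}\right)$ for $u\in(0,1)$, extended by continuity to $[0,1]$ (explicitly $f_{SN_1}^*(u)=\frac{\sqrt2}{2}\sqrt{u^2+(1-u)^2}-\frac14\left(1+2\sqrt{u(1-u)}\right)$), and define $\overline M_{SN_1}(C_1,C_2)=E_X\{f_{SN_1}^*(P(C_2\mid x))\}$. Then $$P_e\le \frac12\left[1-\frac{4}{2\sqrt2-1}\,\overline M_{SN_1}(C_1,C_2)\right].$$
   Context: Two-class decision problem: classes $C_1,C_2$, an observation $x$ in a space $\mathrm X$ with density $p(x)$, and a posteriori probabilities $P(C_1\mid x),P(C_2\mid x)\ge0$ with $P(C_1\mid x)+P(C_2\mid x)=1$. $E_X\{g(x)\}=\int_{\mathrm X} g(x)p(x)\,dx$. $P_e=E_X\{\min(P(C_1\mid x),P(C_2\mid x))\}$ is the Bayesian probability of error. *)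

theory Defs
  imports "HOL-Analysis.Analysis"
begin

definition fSN1 :: "real \<Rightarrow> real" where
  "fSN1 x = sqrt ((x^2 + 1) / 2) - ((sqrt x + 1) / 2)^2"

text \<open>u f((1-u)/u) on (0,1), extended by continuity to the endpoints
  (both limits equal sqrt 2 / 2 - 1/4).\<close>
definition fSN1_star :: "real \<Rightarrow> real" where
  "fSN1_star u = (if 0 < u \<and> u < 1 then u * fSN1 ((1 - u) / u)
                  else sqrt 2 / 2 - 1 / 4)"

end

theory Submission imports Defs begin
lemma star_eq: assumes "0<u" "u<1"
  shows "fSN1_star u = sqrt ((u^2+(1-u)^2)/2) - (1 + 2 * sqrt(u*(1-u)))/4"
proof -
  have su: "sqrt u * sqrt u = u" using assms by simp
  have sv: "sqrt (1-u) * sqrt (1-u) = 1-u" using assms by simp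
  have "u * sqrt ((((1-u)/u)^2+1)/2) = sqrt (u^2) * sqrt ((((1-u)/u)^2+1)/2)" using assms by simp
  also have "\<dots> = sqrt ((u^2+(1-u)^2)/2)" unfolding real_sqrt_mult[symmetric]
    using assms by (simp add: field_simps power2_eq_square)
  finally have A: "u * sqrt ((((1-u)/u)^2+1)/2) = sqrt ((u^2+(1-u)^2)/2)" .
  have gen: "\<And>a b::real. a*a*(b+1)^2/4 = (a*b+a)^2/4" by algebra
  have gen2: "\<And>a b::real. (a+b)^2/4 = (a*a+b*b+2*(a*b))/4" by algebra
  have m: "sqrt(u*(1-u)) = sqrt (1-u) * sqrt u" by (simp add: real_sqrt_mult)
  have w: "sqrt u * sqrt ((1-u)/u) = sqrt (1-u)" using assms
    by (simp add: real_sqrt_divide)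
  have "u * ((sqrt ((1-u)/u) + 1)/2)^2 = (sqrt u * sqrt u) * (sqrt ((1-u)/u) + 1)^2 / 4"
    by (subst su) (simp add: power2_eq_square field_simps)
  also have "\<dots> = (sqrt u * sqrt ((1-u)/u) + sqrt u)^2 / 4"
    using gen by blast
  also have "\<dots> = (sqrt (1-u) + sqrt u)^2 / 4" using w by simp
  also have "\<dots> = (sqrt(1-u) * sqrt(1-u) + sqrt u * sqrt u + 2*(sqrt(1-u) * sqrt u))/4" by (rule gen2)
  also have "\<dots> = (1 + 2 * sqrt(u*(1-u)))/4" by (simp only: m su sv) simp
  finally have B: "u * ((sqrt ((1-u)/u) + 1)/2)^2 = (1 + 2 * sqrt(u*(1-u)))/4" .
  show ?thesis using assms A B unfolding fSN1_star_def fSN1_def by (simp add: right_diff_distrib)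
qed

lemma pt: assumes "0\<le>u" "u\<le>1"
  shows "min u (1-u) \<le> 1/2 * (1 - 4/(2 * sqrt 2 - 1) * fSN1_star u)"
proof -
  have s2: "sqrt 2 * sqrt 2 = 2" by simp
  have s1: "sqrt 2 > 1" by simp
  have cpos: "2 * sqrt 2 - 1 > 0" using s1 by linarith
  have key: "fSN1_star u \<le> (2 * sqrt 2 - 1)/4 * \<bar>1-2*u\<bar>"
  proof (cases "0<u \<and> u<1")
    case True
    define t where "t = \<bar>1-2*u\<bar>"
    have t0: "0\<le>t" "t\<le>1" using assms unfolding t_def by auto
    have tt: "t*t = (1-2*u)*(1-2*u)" unfolding t_def by (simp add: abs_mult_self_eq)
    have h1: "sqrt ((u^2+(1-u)^2)/2) \<le> 1/2 + (sqrt 2 - 1)/2 * t"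
    proof -
      have "(u^2+(1-u)^2)/2 \<le> (1/2 + (sqrt 2 - 1)/2 * t)^2"
      proof -
        have h: "0 \<le> (sqrt 2 - 1) * (t * (1-t))" using t0 s1 by simp
        have e1: "(u^2+(1-u)^2)/2 = (1+t*t)/4" using tt by (simp add: power2_eq_square algebra_simps)
        have e2: "(1/2 + (sqrt 2 - 1)/2 * t)^2 = 1/4 + (sqrt 2 - 1)*t/2 + (3 - 2 * sqrt 2)*(t*t)/4"
        proof -
          have g: "\<And>s t::real. s * s = 2 \<Longrightarrow> (1/2 + (s - 1)/2 * t)^2 = 1/4 + (s - 1)*t/2 + (3 - 2 * s)*(t*t)/4"
          proof -
            fix s t :: real assume h: "s * s = 2"
            have "(1/2 + (s - 1)/2 * t)^2 = (1 + 2*(s-1)*t + (s * s - 2 * s + 1)*(t*t))/4"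
              by (simp add: power2_eq_square field_simps)
            also have "\<dots> = 1/4 + (s - 1)*t/2 + (3 - 2 * s)*(t*t)/4" unfolding h by (simp add: field_simps)
            finally show "(1/2 + (s - 1)/2 * t)^2 = 1/4 + (s - 1)*t/2 + (3 - 2 * s)*(t*t)/4" .
          qed
          show ?thesis using g[OF s2] .
        qed
        have "(1+t*t)/4 \<le> 1/4 + (sqrt 2 - 1)*t/2 + (3 - 2 * sqrt 2)*(t*t)/4"
        proof -
          have "1/4 + (sqrt 2 - 1)*t/2 + (3 - 2 * sqrt 2)*(t*t)/4 - (1+t*t)/4 = (sqrt 2 - 1) * (t * (1-t)) / 2"
            by (simp add: field_simps)
          thus ?thesis using h by linarith
        qed
        thus ?thesis unfolding e1 e2 .
      qed
      hence "sqrt ((u^2+(1-u)^2)/2) \<le> sqrt ((1/2 + (sqrt 2 - 1)/2 * t)^2)"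
        by (rule real_sqrt_le_mono)
      also have "\<dots> = 1/2 + (sqrt 2 - 1)/2 * t" using s1 t0 by simp
      finally show ?thesis .
    qed
    have h2: "(1 - t)/2 \<le> sqrt(u*(1-u))"
    proof (rule real_le_rsqrt)
      have "0 \<le> (1-t)*t" using t0 by simp
      moreover have "((1-t)/2)^2 = (1 - 2*t + t*t)/4" by (simp add: power2_eq_square field_simps)
      moreover have "t*t = 1 - 4*u + 4*(u*u)" using tt by (simp add: algebra_simps)
      moreover have "0 \<le> (1-t)*t \<longleftrightarrow> t*t \<le> t" by (simp add: algebra_simps)
      ultimately show "((1-t)/2)^2 \<le> u*(1-u)" by (simp add: algebra_simps)
    qed
    have "fSN1_star u \<le> 1/2 + (sqrt 2 - 1)/2 * t - (1 + (1-t))/4"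
    proof -
      have "fSN1_star u = sqrt ((u^2+(1-u)^2)/2) - (1 + 2 * sqrt(u*(1-u)))/4"
        using star_eq[of u] True by blast
      moreover have gl: "\<And>f A S K::real. f = A - (1 + 2*S)/4 \<Longrightarrow> A \<le> 1/2 + K \<Longrightarrow> (1-t)/2 \<le> S \<Longrightarrow> f \<le> 1/2 + K - (1 + (1-t))/4"
        by (simp add: field_simps)
      ultimately show ?thesis using h1 h2 by blast
    qed
    also have "\<dots> = (2 * sqrt 2 - 1)/4 * t"
    proof -
      have g: "\<And>s t::real. 1/2 + (s - 1)/2 * t - (1 + (1-t))/4 = (2 * s - 1)/4 * t"
        by (simp add: field_simps)
      show ?thesis by (rule g)
    qed
    finally show ?thesis unfolding t_def .
  next
    case False
    hence "u = 0 \<or> u = 1" using assms by auto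
    hence "fSN1_star u = (2 * sqrt 2 - 1)/4" and "\<bar>1-2*u\<bar> = 1" unfolding fSN1_star_def by auto
    thus ?thesis by simp
  qed
  have "4/(2 * sqrt 2 - 1) * fSN1_star u \<le> 4/(2 * sqrt 2 - 1) * ((2 * sqrt 2 - 1)/4 * \<bar>1-2*u\<bar>)"
    using key cpos by (intro mult_left_mono) auto
  also have "\<dots> = \<bar>1-2*u\<bar>" using cpos by simp
  finally have "4/(2 * sqrt 2 - 1) * fSN1_star u \<le> \<bar>1-2*u\<bar>" .
  moreover have "min u (1-u) = (1 - \<bar>1-2*u\<bar>)/2" by (simp add: min_def abs_if)
  ultimately show ?thesis by (simp add: field_simps)
qed

lemma pt2: assumes "0\<le>u" "u\<le>1"
  shows "4/(2 * sqrt 2 - 1) * fSN1_star u \<le> 1"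
  using pt[OF assms] assms by (simp add: min_def split: if_splits)

theorem mainTheorem4:
  fixes N :: "'a measure" and p P1 P2 :: "'a \<Rightarrow> real"
  assumes p_meas: "p \<in> borel_measurable N"
    and p_nonneg: "\<And>x. x \<in> space N \<Longrightarrow> p x \<ge> 0"
    and p_int: "integrable N p"
    and p_one: "(\<integral>x. p x \<partial>N) = 1"
    and P1_meas: "P1 \<in> borel_measurable N"
    and P2_meas: "P2 \<in> borel_measurable N"
    and P1_nonneg: "\<And>x. x \<in> space N \<Longrightarrow> P1 x \<ge> 0"
    and P2_nonneg: "\<And>x. x \<in> space N \<Longrightarrow> P2 x \<ge> 0"
    and P_sum: "\<And>x. x \<in> space N \<Longrightarrow> P1 x + P2 x = 1"
  shows "(\<integral>x. min (P1 x) (P2 x) * p x \<partial>N)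
         \<le> 1 / 2 * (1 - 4 / (2 * sqrt 2 - 1) * (\<integral>x. fSN1_star (P2 x) * p x \<partial>N))"
proof -
  define c where "c = 4 / (2 * sqrt 2 - 1)"
  have s1: "sqrt 2 > 1" by simp
  have "2 * sqrt 2 - 1 > 0" using s1 by linarith
  hence cpos: "c > 0" unfolding c_def by simp
  define M where "M = (\<lambda>x. min (P1 x) (P2 x) * p x)"
  define F where "F = (\<lambda>x. fSN1_star (P2 x) * p x)"
  have u01: "0 \<le> P2 x \<and> P2 x \<le> 1" if "x \<in> space N" for x
    using P2_nonneg[OF that] P1_nonneg[OF that] P_sum[OF that] by linarith
  have P1eq: "P1 x = 1 - P2 x" if "x \<in> space N" for x using P_sum[OF that] by linarith
  have ptM: "M x \<le> 1/2 * p x - c/2 * F x" if x: "x \<in> space N" for x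
  proof -
    have "min (P1 x) (P2 x) \<le> 1/2 * (1 - c * fSN1_star (P2 x))"
      using pt[of "P2 x"] u01[OF x] P1eq[OF x] unfolding c_def by (simp add: min.commute)
    hence "min (P1 x) (P2 x) * p x \<le> 1/2 * (1 - c * fSN1_star (P2 x)) * p x"
      using p_nonneg[OF x] by (rule mult_right_mono)
    thus ?thesis unfolding M_def F_def by (simp add: algebra_simps)
  qed
  have ptM2: "M x \<le> 1/2 * p x" if x: "x \<in> space N" for x
  proof -
    have "min (P1 x) (P2 x) \<le> 1/2" using P_sum[OF x] by linarith
    hence "min (P1 x) (P2 x) * p x \<le> 1/2 * p x"
      using p_nonneg[OF x] by (rule mult_right_mono)
    thus ?thesis unfolding M_def .
  qed
  have ptF: "F x \<le> 1/c * p x" if x: "x \<in> space N" for x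
  proof -
    have "c * fSN1_star (P2 x) \<le> 1" using pt2[of "P2 x"] u01[OF x] unfolding c_def by simp
    hence "fSN1_star (P2 x) \<le> 1/c" using cpos by (simp add: field_simps)
    hence "fSN1_star (P2 x) * p x \<le> 1/c * p x"
      using p_nonneg[OF x] by (rule mult_right_mono)
    thus ?thesis unfolding F_def .
  qed
  have goal: "integral\<^sup>L N M \<le> 1/2 * (1 - c * integral\<^sup>L N F)"
  proof (cases "integrable N F")
    case Fi: True
    show ?thesis
    proof (cases "integrable N M")
      case True
      have "integral\<^sup>L N M \<le> (\<integral>x. 1/2 * p x - c/2 * F x \<partial>N)"
        using True Fi p_int ptM by (intro integral_mono) auto
      also have "\<dots> = 1/2 * (\<integral>x. p x \<partial>N) - c/2 * integral\<^sup>L N F"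
        using Fi p_int by simp
      finally show ?thesis using p_one by (simp add: algebra_simps)
    next
      case False
      have "integral\<^sup>L N F \<le> (\<integral>x. 1/c * p x \<partial>N)"
        using Fi p_int ptF by (intro integral_mono) auto
      also have "\<dots> = 1/c" using p_one by simp
      finally have "c * integral\<^sup>L N F \<le> 1" using cpos by (simp add: field_simps)
      moreover have "integral\<^sup>L N M = 0" using False by (rule not_integrable_integral_eq)
      ultimately show ?thesis by simp
    qed
  next
    case False
    hence F0: "integral\<^sup>L N F = 0" by (rule not_integrable_integral_eq)
    show ?thesis
    proof (cases "integrable N M")
      case True
      have "integral\<^sup>L N M \<le> (\<integral>x. 1/2 * p x \<partial>N)"
        using True p_int ptM2 by (intro integral_mono) auto
      thus ?thesis using p_one F0 by simp
    next
      case False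
      thus ?thesis using F0 by (simp add: not_integrable_integral_eq)
    qed
  qed
  thus ?thesis unfolding M_def F_def c_def .
qed

end
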